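(* Let $T>0$, $\mu,\theta>0$, $x_0\in\mathbb R$, $H\in(0,1)$, let $B^H$ be a fractional Brownian motion with Hurst index $H$ and let $X$ be the fractional Ornstein–Uhlenbeck process, i.e. the solution of $X_t=x_0-\mu\int_0^tX_s\,ds+\theta B^H_t$, $t\le T$. Let $(\pi_n)$ be a sequence of partitions of $[0,T]$ with $m_n\le c\,p_n$ for some constant $c\ge1$ and all $n$, and $m_n\to0$. Then, with the second order quadratic variation taken with index $\gamma=H$, for every $\varepsilon>0$, almost surely $$\big|V^{(2)}_{\pi_n}(X,2)-\theta^2V^{(2)}_{\pi_n}(B^H,2)\big|=O(p_n^{1-\varepsilon})\qquad(n\to\infty),$$ where the constant in $O(\cdot)$ may be random.
   Context: Partitions $\pi_n=\{0=t^n_0<\dots<t^n_{N_n}=T\}$, $\Delta^n_kt=t^n_k-t^n_{k-1}$, $m_n=\max_k\Delta^n_kt$, $p_n=\min_k\Delta^n_kt$. For a process $Y$, $\Delta^{(2)n}_{ir,k}Y=\Delta^n_kt\,Y(t^n_{k+1})+\Delta^n_{k+1}t\,Y(t^n_{k-1})-(\Delta^n_kt+\Delta^n_{k+1}t)Y(t^n_k)$ and $V^{(2)}_{\pi_n}(Y,2)=2\sum_{k=1}^{N_n-1}\Delta^n_{k+1}t\,(\Delta^{(2)n}_{ir,k}Y)^2/\big[(\Delta^n_kt)^{H+1/2}(\Delta^n_{k+1}t)^{H+1/2}(\Delta^n_kt+\Delta^n_{k+1}t)\big]$. The integral $\int_0^te^{-\mu(t-u)}dB^H_u$ in the explicit solution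 $X_t=x_0e^{-\mu t}+\theta\int_0^te^{-\mu(t-u)}dB^H_u$ is a pathwise Riemann–Stieltjes integral. *)

theory Defs
  imports "HOL-Probability.Probability" "HOL-Library.Landau_Symbols"
begin

definition fbm_cov :: "real \<Rightarrow> real \<Rightarrow> real \<Rightarrow> real" where
  "fbm_cov H s t = (\<bar>s\<bar> powr (2*H) + \<bar>t\<bar> powr (2*H) - \<bar>t - s\<bar> powr (2*H)) / 2"

text \<open>Fractional Brownian motion on [0,oo) with Hurst index H on the probability space M:
  a process with B 0 = 0 and continuous paths, whose finite-dimensional distributions
  are centered Gaussian with covariance fbm_cov H (characterised by the characteristic
  function of finite linear combinations).\<close>
definition is_fBm :: "'a measure \<Rightarrow> real \<Rightarrow> (real \<Rightarrow> 'a \<Rightarrow> real) \<Rightarrow> bool" where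
  "is_fBm M H B \<longleftrightarrow>
     prob_space M \<and>
     (\<forall>t. B t \<in> borel_measurable M) \<and>
     (\<forall>\<omega>\<in>space M. B 0 \<omega> = 0 \<and> continuous_on {0..} (\<lambda>t. B t \<omega>)) \<and>
     (\<forall>(n::nat) (ts::nat \<Rightarrow> real) (cs::nat \<Rightarrow> real). (\<forall>k<n. ts k \<ge> 0) \<longrightarrow>
        (LINT \<omega>|M. cis (\<Sum>k<n. cs k * B (ts k) \<omega>)) =
        complex_of_real (exp (- (1/2) * (\<Sum>j<n. \<Sum>k<n. cs j * cs k * fbm_cov H (ts j) (ts k)))))"

definition is_partition :: "real \<Rightarrow> nat \<Rightarrow> (nat \<Rightarrow> real) \<Rightarrow> bool" where
  "is_partition T N tp \<longleftrightarrow> N \<ge> 1 \<and> tp 0 = 0 \<and> tp N = T \<and> (\<forall>k<N. tp k < tp (Suc k))"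

definition pdelta :: "(nat \<Rightarrow> real) \<Rightarrow> nat \<Rightarrow> real" where
  "pdelta tp k = tp k - tp (k - 1)"

definition pmesh :: "nat \<Rightarrow> (nat \<Rightarrow> real) \<Rightarrow> real" where
  "pmesh N tp = Max ((pdelta tp) ` {1..N})"

definition pmin :: "nat \<Rightarrow> (nat \<Rightarrow> real) \<Rightarrow> real" where
  "pmin N tp = Min ((pdelta tp) ` {1..N})"

definition diff2 :: "(nat \<Rightarrow> real) \<Rightarrow> (real \<Rightarrow> real) \<Rightarrow> nat \<Rightarrow> real" where
  "diff2 tp Y k = pdelta tp k * Y (tp (Suc k)) + pdelta tp (Suc k) * Y (tp (k - 1))
                  - (pdelta tp k + pdelta tp (Suc k)) * Y (tp k)"

definition V2 :: "real \<Rightarrow> nat \<Rightarrow> (nat \<Rightarrow> real) \<Rightarrow> (real \<Rightarrow> real) \<Rightarrow> real" where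
  "V2 \<gamma> N tp Y = 2 * (\<Sum>k\<in>{1..<N}.
      pdelta tp (Suc k) * (diff2 tp Y k)\<^sup>2 /
      (pdelta tp k powr (\<gamma> + 1/2) * pdelta tp (Suc k) powr (\<gamma> + 1/2)
       * (pdelta tp k + pdelta tp (Suc k))))"

end

theory Submission
  imports Defs
begin
lemma fbm_char:
  assumes fbm: "is_fBm M H B" and s: "s \<ge> 0" and t: "t \<ge> 0"
  shows "char (distr M borel (\<lambda>\<omega>. B t \<omega> - B s \<omega>)) u
       = complex_of_real (exp (- (1/2) * (u^2 * \<bar>t - s\<bar> powr (2*H))))"
proof -
  have meas: "\<And>t. B t \<in> borel_measurable M" using fbm unfolding is_fBm_def by auto
  have ps: "prob_space M" using fbm unfolding is_fBm_def by auto
  define ts where "ts = (\<lambda>k::nat. if k = 0 then t else s)"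
  define cs where "cs = (\<lambda>k::nat. if k = 0 then u else -u)"
  have "(LINT \<omega>|M. cis (\<Sum>k<2. cs k * B (ts k) \<omega>)) =
        complex_of_real (exp (- (1/2) * (\<Sum>j<2. \<Sum>k<2. cs j * cs k * fbm_cov H (ts j) (ts k))))"
    using fbm s t unfolding is_fBm_def ts_def by auto
  moreover have "(\<Sum>j<2. \<Sum>k<2. cs j * cs k * fbm_cov H (ts j) (ts k)) = u^2 * \<bar>t - s\<bar> powr (2*H)"
    using s t by (simp add: numeral_2_eq_2 cs_def ts_def fbm_cov_def abs_minus_commute power2_eq_square field_simps)
  moreover have "char (distr M borel (\<lambda>\<omega>. B t \<omega> - B s \<omega>)) u = (LINT \<omega>|M. cis (\<Sum>k<2. cs k * B (ts k) \<omega>))"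
    unfolding char_def using meas
    by (subst integral_distr) (auto simp: numeral_2_eq_2 cs_def ts_def cis_conv_exp algebra_simps)
  ultimately show ?thesis by simp
qed

lemma fbm_distr:
  assumes fbm: "is_fBm M H B" and s: "s \<ge> 0" and t: "t \<ge> 0"
  shows "distr M borel (\<lambda>\<omega>. B t \<omega> - B s \<omega>) =
         distr std_normal_distribution borel (\<lambda>x. \<bar>t - s\<bar> powr H * x)"
proof -
  have meas: "\<And>t. B t \<in> borel_measurable M" using fbm unfolding is_fBm_def by auto
  have ps: "prob_space M" using fbm unfolding is_fBm_def by auto
  interpret prob_space M by (rule ps)
  have ps2: "prob_space std_normal_distribution" using real_dist_normal_dist
    by (simp add: real_distribution_def)
  let ?\<sigma> = "\<bar>t - s\<bar> powr H"
  show ?thesis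
  proof (rule Levy_uniqueness)
    show "real_distribution (distr M borel (\<lambda>\<omega>. B t \<omega> - B s \<omega>))"
      using meas by (intro real_distribution_distr) auto
    show "real_distribution (distr std_normal_distribution borel (\<lambda>x. ?\<sigma> * x))"
      using prob_space.real_distribution_distr[OF ps2] by auto
    show "char (distr M borel (\<lambda>\<omega>. B t \<omega> - B s \<omega>)) =
          char (distr std_normal_distribution borel (\<lambda>x. ?\<sigma> * x))"
    proof
      fix u
      have "char (distr std_normal_distribution borel (\<lambda>x. ?\<sigma> * x)) u
          = char std_normal_distribution (u * ?\<sigma>)"
        unfolding char_def by (subst integral_distr) (auto simp: algebra_simps)
      also have "\<dots> = complex_of_real (exp (- (1/2) * (u^2 * \<bar>t - s\<bar> powr (2*H))))"
        unfolding char_std_normal_distribution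
        by (simp add: power_mult_distrib powr_powr[symmetric] powr_realpow[symmetric]
             mult.commute del: powr_realpow)
      finally show "char (distr M borel (\<lambda>\<omega>. B t \<omega> - B s \<omega>)) u =
          char (distr std_normal_distribution borel (\<lambda>x. ?\<sigma> * x)) u"
        using fbm_char[OF fbm s t] by simp
    qed
  qed
qed

lemma fbm_moment:
  assumes fbm: "is_fBm M H B" and s: "s \<ge> 0" and t: "t \<ge> 0"
  shows "integrable M (\<lambda>\<omega>. (B t \<omega> - B s \<omega>) ^ (2*q))"
    and "(LINT \<omega>|M. (B t \<omega> - B s \<omega>) ^ (2*q)) =
         (\<bar>t - s\<bar> powr H) ^ (2*q) * (LINT x|std_normal_distribution. x ^ (2*q))"
proof -
  have meas: "\<And>t. B t \<in> borel_measurable M" using fbm unfolding is_fBm_def by auto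
  let ?\<sigma> = "\<bar>t - s\<bar> powr H"
  note D = fbm_distr[OF fbm s t]
  have "integrable (distr M borel (\<lambda>\<omega>. B t \<omega> - B s \<omega>)) (\<lambda>y. y ^ (2*q))"
    unfolding D
    by (subst integrable_distr_eq)
       (auto simp: power_mult_distrib intro!: integrable_mult_right integrable_std_normal_distribution_moment)
  then show "integrable M (\<lambda>\<omega>. (B t \<omega> - B s \<omega>) ^ (2*q))"
    using meas by (subst (asm) integrable_distr_eq) auto
  have "(LINT \<omega>|M. (B t \<omega> - B s \<omega>) ^ (2*q)) =
        (LINT y|distr M borel (\<lambda>\<omega>. B t \<omega> - B s \<omega>). y ^ (2*q))"
    using meas by (subst integral_distr) auto
  also have "\<dots> = (LINT x|std_normal_distribution. (?\<sigma> * x) ^ (2*q))"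
    unfolding D by (subst integral_distr) auto
  also have "\<dots> = ?\<sigma> ^ (2*q) * (LINT x|std_normal_distribution. x ^ (2*q))"
    by (simp add: power_mult_distrib)
  finally show "(LINT \<omega>|M. (B t \<omega> - B s \<omega>) ^ (2*q)) =
         (\<bar>t - s\<bar> powr H) ^ (2*q) * (LINT x|std_normal_distribution. x ^ (2*q))" .
qed

lemma fbm_tail:
  assumes fbm: "is_fBm M H B" and s: "s \<ge> 0" and t: "t \<ge> 0" and x: "x > 0" and q: "q > 0"
  shows "measure M {\<omega>\<in>space M. x \<le> \<bar>B t \<omega> - B s \<omega>\<bar>} \<le>
     (\<bar>t - s\<bar> powr H) ^ (2*q) * (LINT x|std_normal_distribution. x ^ (2*q)) / x ^ (2*q)"
proof -
  have meas: "\<And>t. B t \<in> borel_measurable M" using fbm unfolding is_fBm_def by auto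
  have "{\<omega>\<in>space M. x \<le> \<bar>B t \<omega> - B s \<omega>\<bar>} = {\<omega>\<in>space M. x^(2*q) \<le> (B t \<omega> - B s \<omega>)^(2*q)}"
  proof -
    have "\<And>z. (x \<le> \<bar>z\<bar>) = (x^(2*q) \<le> \<bar>z\<bar>^(2*q))"
      using x q by (simp add: power_mono_iff)
    then show ?thesis by (simp add: power_even_abs)
  qed
  also have "measure M \<dots> \<le> (LINT \<omega>|M. (B t \<omega> - B s \<omega>) ^ (2*q)) / x^(2*q)"
    by (rule integral_Markov_inequality_measure[where A="space M"])
       (use fbm_moment(1)[OF fbm s t] x in \<open>auto simp: zero_le_even_power\<close>)
  finally show ?thesis using fbm_moment(2)[OF fbm s t] by simp
qed

lemma dyadic_sigma:
  assumes T: "T > 0"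
  shows "\<bar>T * real (Suc k) / 2^j - T * real k / 2^j\<bar> powr H = T powr H * (2 powr (-H))^j"
proof -
  have "\<bar>T * real (Suc k) / 2^j - T * real k / 2^j\<bar> = T / 2^j"
    using T by (simp add: field_simps)
  moreover have "(T / 2^j) powr H = T powr H * (2 powr (-H))^j"
  proof -
    have "(T / 2^j) powr H = T powr H / (2^j) powr H" using T by (simp add: powr_divide)
    also have "(2::real)^j = 2 powr real j" by (simp add: powr_realpow)
    also have "(2 powr real j) powr H = (2 powr H) powr real j" by (simp add: powr_powr mult.commute)
    also have "\<dots> = (2 powr H)^j" by (simp add: powr_realpow)
    finally show ?thesis by (simp add: powr_minus power_inverse divide_inverse powr_realpow)
  qed
  ultimately show ?thesis by simp
qed

lemma fbm_dyadic:
  assumes fbm: "is_fBm M H B" and T: "T > 0" and a0: "0 < \<alpha>" and aH: "\<alpha> < H"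
  shows "AE \<omega> in M. \<exists>J. \<forall>j\<ge>J. \<forall>k<(2::nat)^j.
      \<bar>B (T * real (Suc k) / 2^j) \<omega> - B (T * real k / 2^j) \<omega>\<bar> \<le> (2 powr (-\<alpha>))^j"
proof -
  have meas: "\<And>t. B t \<in> borel_measurable M" using fbm unfolding is_fBm_def by auto
  have ps: "prob_space M" using fbm unfolding is_fBm_def by auto
  interpret prob_space M by (rule ps)
  define \<gamma> where "\<gamma> = (2::real) powr (\<alpha> - H)"
  define \<rho> where "\<rho> = (2::real) powr (-\<alpha>)"
  have g0: "0 < \<gamma>" and g1: "\<gamma> < 1" using aH unfolding \<gamma>_def by (auto simp: powr_less_one)
  have r0: "0 < \<rho>" unfolding \<rho>_def by auto
  have "(\<lambda>n. \<gamma>^n) \<longlonglongrightarrow> 0" using g0 g1 by (intro LIMSEQ_power_zero) auto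
  then have "eventually (\<lambda>n. \<gamma>^n < 1/4) sequentially"
    by (rule order_tendstoD) auto
  then obtain n0 where n0: "\<And>n. n \<ge> n0 \<Longrightarrow> \<gamma>^n < 1/4" by (auto simp: eventually_sequentially)
  define q where "q = Suc n0"
  have q0: "q > 0" unfolding q_def by auto
  have gq: "\<gamma>^(2*q) \<le> 1/4" using n0[of "2*q"] unfolding q_def by auto
  define Kq where "Kq = (LINT x|std_normal_distribution. x ^ (2*q))"
  have Kq0: "Kq \<ge> 0" unfolding Kq_def by (rule integral_nonneg_AE) (auto simp: zero_le_even_power)
  define C where "C = Kq * (T powr H)^(2*q)"
  have C0: "C \<ge> 0" unfolding C_def using Kq0 by auto
  define Z where "Z = (\<lambda>j k \<omega>. B (T * real (Suc k) / 2^j) \<omega> - B (T * real k / 2^j) \<omega>)"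
  define A where "A = (\<lambda>j. \<Union>k\<in>{..<(2::nat)^j}. {\<omega>\<in>space M. \<rho>^j \<le> \<bar>Z j k \<omega>\<bar>})"
  have Ameas: "A j \<in> sets M" for j
    unfolding A_def Z_def using meas by (intro sets.finite_UN) auto
  have Abound: "measure M (A j) \<le> C * (1/2)^j" for j
  proof -
    have "measure M (A j) \<le> (\<Sum>k\<in>{..<(2::nat)^j}. measure M {\<omega>\<in>space M. \<rho>^j \<le> \<bar>Z j k \<omega>\<bar>})"
      unfolding A_def using meas unfolding Z_def
      by (intro finite_measure_subadditive_finite) auto
    also have "\<dots> \<le> (\<Sum>k\<in>{..<(2::nat)^j}. (T powr H * (2 powr (-H))^j) ^ (2*q) * Kq / (\<rho>^j) ^ (2*q))"
    proof (rule sum_mono)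
      fix k assume "k \<in> {..<(2::nat)^j}"
      show "measure M {\<omega>\<in>space M. \<rho>^j \<le> \<bar>Z j k \<omega>\<bar>} \<le> (T powr H * (2 powr (-H))^j) ^ (2*q) * Kq / (\<rho>^j) ^ (2*q)"
        using fbm_tail[OF fbm _ _ _ q0, of "T * real k / 2^j" "T * real (Suc k) / 2^j" "\<rho>^j"]
          T r0 dyadic_sigma[OF T, of k j H] unfolding Z_def Kq_def by auto
    qed
    also have "\<dots> = 2^j * (C * (\<gamma>^(2*q))^j)"
    proof -
      have "(T powr H * (2 powr (-H))^j) ^ (2*q) * Kq / (\<rho>^j) ^ (2*q)
           = C * ((2 powr (-H)) / \<rho>)^(2*q*j)"
        unfolding C_def using r0
        by (simp add: power_mult_distrib power_divide field_simps power_mult[symmetric] mult.commute)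
      also have "(2 powr (-H)) / \<rho> = \<gamma>" unfolding \<gamma>_def \<rho>_def by (simp add: powr_diff[symmetric])
      finally show ?thesis by (simp add: power_mult)
    qed
    also have "\<dots> \<le> 2^j * (C * (1/4)^j)"
      using C0 gq g0 by (intro mult_left_mono power_mono) auto
    also have "\<dots> = C * (1/2)^j" by (simp add: power_divide field_simps power_mult_distrib[symmetric])
    finally show ?thesis .
  qed
  have "summable (\<lambda>j. measure M (A j))"
    by (rule summable_comparison_test[where g="\<lambda>j. C * (1/2)^j"])
       (use Abound in \<open>auto intro!: summable_mult complete_algebra_summable_geometric\<close>)
  then have "AE \<omega> in M. eventually (\<lambda>j. \<omega> \<in> space M - A j) sequentially"
    by (intro borel_cantelli_AE1) (auto simp: Ameas less_top[symmetric])
  then show ?thesis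
  proof (rule AE_mp, intro AE_I2 impI)
    fix \<omega> assume "\<omega> \<in> space M" and ev: "eventually (\<lambda>j. \<omega> \<in> space M - A j) sequentially"
    then obtain J where J: "\<And>j. j \<ge> J \<Longrightarrow> \<omega> \<notin> A j" by (auto simp: eventually_sequentially)
    show "\<exists>J. \<forall>j\<ge>J. \<forall>k<(2::nat)^j.
      \<bar>B (T * real (Suc k) / 2^j) \<omega> - B (T * real k / 2^j) \<omega>\<bar> \<le> (2 powr (-\<alpha>))^j"
    proof (intro exI allI impI)
      fix j k assume "J \<le> j" "k < (2::nat)^j"
      then show "\<bar>B (T * real (Suc k) / 2^j) \<omega> - B (T * real k / 2^j) \<omega>\<bar> \<le> (2 powr (-\<alpha>))^j"
        using J[of j] \<open>\<omega> \<in> space M\<close> unfolding A_def Z_def \<rho>_def by force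
    qed
  qed
qed

definition idx :: "real \<Rightarrow> nat \<Rightarrow> real \<Rightarrow> int" where
  "idx T j s = \<lfloor>s * 2^j / T\<rfloor>"

definition pt :: "real \<Rightarrow> nat \<Rightarrow> real \<Rightarrow> real" where
  "pt T j s = T * of_int (idx T j s) / 2^j"

lemma idx_facts:
  assumes T: "T > 0" and s: "0 \<le> s" "s \<le> T"
  shows "0 \<le> idx T j s" "idx T j s \<le> 2^j" "pt T j s \<le> s" "s - pt T j s \<le> T / 2^j" "0 \<le> pt T j s"
proof -
  have y0: "0 \<le> s * 2^j / T" using T s by auto
  have y1: "s * 2^j / T \<le> 2^j" using T s by (simp add: field_simps)
  show "0 \<le> idx T j s" unfolding idx_def using y0 by auto
  show "idx T j s \<le> 2^j" unfolding idx_def using y1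
    by (metis floor_mono floor_of_nat of_nat_numeral of_nat_power)
  have a: "of_int (idx T j s) \<le> s * 2^j / T" unfolding idx_def by (rule of_int_floor_le)
  have b: "s * 2^j / T < of_int (idx T j s) + 1" unfolding idx_def by linarith
  show "pt T j s \<le> s" unfolding pt_def using a T by (simp add: field_simps)
  have b': "s * 2^j < T * (of_int (idx T j s) + 1)" using b T by (simp add: divide_less_eq mult.commute)
  have c1: "s < T * (of_int (idx T j s) + 1) / 2^j" using b' by (simp add: less_divide_eq)
  have c2: "T * (of_int (idx T j s) + 1) / 2^j = T * of_int (idx T j s) / 2^j + T / 2^j"
    by (simp add: field_simps)
  show "s - pt T j s \<le> T / 2^j" unfolding pt_def using c1 c2 by linarith
  show "0 \<le> pt T j s" unfolding pt_def using \<open>0 \<le> idx T j s\<close> T by simp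
qed

lemma idx_Suc:
  assumes T: "T > 0"
  shows "idx T (Suc j) s = 2 * idx T j s \<or> idx T (Suc j) s = 2 * idx T j s + 1"
proof -
  define y where "y = s * 2^j / T"
  have e: "s * 2^Suc j / T = 2 * y" unfolding y_def by simp
  have "2 * \<lfloor>y\<rfloor> \<le> \<lfloor>2*y\<rfloor>" by (simp add: le_floor_iff)
  moreover have "\<lfloor>2*y\<rfloor> \<le> 2 * \<lfloor>y\<rfloor> + 1" by (simp add: floor_le_iff) (smt (verit) real_of_int_floor_add_one_gt)
  ultimately show ?thesis unfolding idx_def e y_def[symmetric] by linarith
qed

lemma pt_Suc_double: "T * of_int (2 * i) / 2^Suc j = T * of_int i / (2::real)^j"
  by simp

lemma rho_pow: "((2::real) powr (-a))^m = (1/2^m) powr a"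
proof -
  have "((2::real) powr (-a))^m = (2 powr (-a)) powr real m" by (simp add: powr_realpow)
  also have "\<dots> = 2 powr (- (real m * a))" by (simp add: powr_powr mult.commute)
  also have "(1/2^m) = (2::real) powr (- real m)" by (simp add: powr_minus_divide powr_realpow)
  then have "(1/2^m) powr a = 2 powr (- (real m * a))" by (simp add: powr_powr)
  finally show ?thesis by simp
qed

locale chain =
  fixes f :: "real \<Rightarrow> real" and T \<alpha> :: real and J :: nat
  assumes T: "T > 0" and a0: "0 < \<alpha>"
    and cont: "continuous_on {0..T} f"
    and inc: "\<And>j k. j \<ge> J \<Longrightarrow> 0 \<le> k \<Longrightarrow> k < 2^j \<Longrightarrow>
          \<bar>f (T * of_int (k+1) / 2^j) - f (T * of_int k / 2^j)\<bar> \<le> (2 powr (-\<alpha>))^j"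
begin

definition "\<rho> = (2::real) powr (-\<alpha>)"

lemma rho: "0 < \<rho>" "\<rho> < 1"
  unfolding \<rho>_def using a0 by (auto simp: powr_less_one)

lemma step_inc:
  assumes s: "0 \<le> s" "s \<le> T" and j: "Suc j \<ge> J"
  shows "\<bar>f (pt T (Suc j) s) - f (pt T j s)\<bar> \<le> \<rho>^Suc j"
proof -
  note F = idx_facts[OF T s]
  consider "idx T (Suc j) s = 2 * idx T j s" | "idx T (Suc j) s = 2 * idx T j s + 1"
    using idx_Suc[OF T] by blast
  then show ?thesis
  proof cases
    case 1
    then have "pt T (Suc j) s = pt T j s" unfolding pt_def by simp
    then show ?thesis using rho by simp
  next
    case 2
    define k where "k = 2 * idx T j s"
    have k0: "0 \<le> k" using F(1)[of j] unfolding k_def by simp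
    have kl: "k < 2^Suc j" using F(2)[of "Suc j"] 2 unfolding k_def by simp
    have "pt T (Suc j) s = T * of_int (k+1) / 2^Suc j" unfolding pt_def 2 k_def by simp
    moreover have "pt T j s = T * of_int k / 2^Suc j" unfolding pt_def k_def by simp
    ultimately show ?thesis using inc[OF j k0 kl] unfolding \<rho>_def by simp
  qed
qed

lemma chain_sum:
  assumes s: "0 \<le> s" "s \<le> T" and m: "m \<ge> J" and n: "m \<le> n"
  shows "\<bar>f (pt T n s) - f (pt T m s)\<bar> \<le> (\<rho>^Suc m - \<rho>^Suc n) / (1 - \<rho>)"
  using n
proof (induction n rule: dec_induct)
  case base then show ?case by simp
next
  case (step n)
  have "\<bar>f (pt T (Suc n) s) - f (pt T m s)\<bar> \<le>
        \<bar>f (pt T (Suc n) s) - f (pt T n s)\<bar> + \<bar>f (pt T n s) - f (pt T m s)\<bar>" by linarith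
  also have "\<dots> \<le> \<rho>^Suc n + (\<rho>^Suc m - \<rho>^Suc n) / (1 - \<rho>)"
    using step_inc[OF s, of n] step m by (intro add_mono) auto
  also have "\<dots> = (\<rho>^Suc m - \<rho>^Suc (Suc n)) / (1 - \<rho>)"
    using rho by (simp add: field_simps)
  finally show ?case .
qed

lemma pt_lim:
  assumes s: "0 \<le> s" "s \<le> T"
  shows "(\<lambda>n. pt T n s) \<longlonglongrightarrow> s"
proof -
  have "(\<lambda>n. T * (1/2)^n) \<longlonglongrightarrow> T * 0"
    by (intro tendsto_mult tendsto_const LIMSEQ_power_zero) auto
  then have "(\<lambda>n. T * (1/2)^n) \<longlonglongrightarrow> 0" by simp
  then have "(\<lambda>n. s - pt T n s) \<longlonglongrightarrow> 0"
    by (rule Lim_transform_bound[rotated]) (use idx_facts[OF T s] T in \<open>auto simp: power_divide intro!: always_eventually\<close>)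
  then have "(\<lambda>n. s - (s - pt T n s)) \<longlonglongrightarrow> s - 0" by (intro tendsto_diff tendsto_const)
  then show ?thesis by simp
qed

lemma to_pt:
  assumes s: "0 \<le> s" "s \<le> T" and m: "m \<ge> J"
  shows "\<bar>f s - f (pt T m s)\<bar> \<le> \<rho>^m / (1 - \<rho>)"
proof -
  have inT: "\<forall>n. pt T n s \<in> {0..T}" using idx_facts[OF T s] s by (auto intro: order_trans)
  have "(\<lambda>n. f (pt T n s)) \<longlonglongrightarrow> f s"
    by (rule continuous_on_tendsto_compose[OF cont pt_lim[OF s]])
       (use s inT in \<open>auto intro!: always_eventually\<close>)
  then have "(\<lambda>n. \<bar>f (pt T n s) - f (pt T m s)\<bar>) \<longlonglongrightarrow> \<bar>f s - f (pt T m s)\<bar>"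
    by (intro tendsto_intros)
  moreover have "\<forall>n\<ge>m. \<bar>f (pt T n s) - f (pt T m s)\<bar> \<le> \<rho>^m / (1 - \<rho>)"
  proof (intro allI impI)
    fix n assume "m \<le> n"
    have "\<rho>^Suc m \<le> \<rho>^m" using rho by (simp add: mult_left_le_one_le)
    moreover have "0 \<le> \<rho>^Suc n" using rho by simp
    ultimately have "\<rho>^Suc m - \<rho>^Suc n \<le> \<rho>^m" by linarith
    then have "(\<rho>^Suc m - \<rho>^Suc n) / (1 - \<rho>) \<le> \<rho>^m / (1 - \<rho>)"
      using rho by (intro divide_right_mono) auto
    then show "\<bar>f (pt T n s) - f (pt T m s)\<bar> \<le> \<rho>^m / (1 - \<rho>)"
      using chain_sum[OF s m \<open>m \<le> n\<close>] by linarith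
  qed
  ultimately show ?thesis by (intro LIMSEQ_le_const2) auto
qed

lemma close:
  assumes s: "0 \<le> s" and st: "s \<le> t" and t: "t \<le> T" and h: "t - s \<le> T / 2^m" and m: "m \<ge> J"
  shows "\<bar>f t - f s\<bar> \<le> \<rho>^m * (1 + 2 / (1 - \<rho>))"
proof -
  have s': "s \<le> T" and t': "0 \<le> t" using s st t by auto
  have y: "t * 2^m / T \<le> s * 2^m / T + 1" using h T by (simp add: field_simps)
  have i1: "idx T m s \<le> idx T m t" unfolding idx_def using st T
    by (intro floor_mono divide_right_mono mult_right_mono) auto
  have i2: "idx T m t \<le> idx T m s + 1" unfolding idx_def
    using floor_mono[OF y] by simp
  have mid: "\<bar>f (pt T m t) - f (pt T m s)\<bar> \<le> \<rho>^m"
  proof (cases "idx T m t = idx T m s")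
    case True then show ?thesis unfolding pt_def using rho by simp
  next
    case False
    then have e: "idx T m t = idx T m s + 1" using i1 i2 by linarith
    have k0: "0 \<le> idx T m s" using idx_facts(1)[OF T s s'] .
    have kl: "idx T m s < 2^m" using idx_facts(2)[OF T t' t, of m] e by linarith
    show ?thesis using inc[OF m k0 kl] e unfolding pt_def \<rho>_def by simp
  qed
  have "\<bar>f t - f s\<bar> \<le> \<bar>f t - f (pt T m t)\<bar> + \<bar>f (pt T m t) - f (pt T m s)\<bar> + \<bar>f s - f (pt T m s)\<bar>"
    by linarith
  also have "\<dots> \<le> \<rho>^m / (1 - \<rho>) + \<rho>^m + \<rho>^m / (1 - \<rho>)"
    using to_pt[OF t' t m] to_pt[OF s s' m] mid by linarith
  also have "\<dots> = \<rho>^m + 2 * (\<rho>^m / (1 - \<rho>))" by simp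
  also have "\<dots> = \<rho>^m * (1 + 2 / (1 - \<rho>))" by (simp add: algebra_simps)
  finally show ?thesis .
qed

lemma holder_le:
  obtains L where "L \<ge> 0" "\<And>s t. 0 \<le> s \<Longrightarrow> s \<le> t \<Longrightarrow> t \<le> T \<Longrightarrow> \<bar>f t - f s\<bar> \<le> L * (t - s) powr \<alpha>"
proof -
  have "bounded (f ` {0..T})" by (intro compact_imp_bounded compact_continuous_image cont) auto
  then obtain K where K0': "\<forall>x\<in>f ` {0..T}. norm x \<le> K" unfolding bounded_iff by blast
  have K: "\<And>x. x \<in> {0..T} \<Longrightarrow> \<bar>f x\<bar> \<le> K" using K0' by auto
  have K0: "K \<ge> 0" using K[of 0] T by auto
  define C0 where "C0 = 1 + 2 / (1 - \<rho>)"
  have C0: "C0 \<ge> 0" unfolding C0_def using rho by auto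
  define L where "L = C0 * (2/T) powr \<alpha> + 2 * K * (2^J/T) powr \<alpha>"
  have L0: "L \<ge> 0" unfolding L_def using C0 K0 by auto
  have "\<bar>f t - f s\<bar> \<le> L * (t - s) powr \<alpha>" if s: "0 \<le> s" and st: "s \<le> t" and t: "t \<le> T" for s t
  proof (cases "s = t")
    case True then show ?thesis by simp
  next
    case False
    define h where "h = t - s"
    have h0: "h > 0" using False st unfolding h_def by auto
    show ?thesis
    proof (cases "h \<le> T / 2^J")
      case True
      have "(\<lambda>n. T * (1/2)^n) \<longlonglongrightarrow> T * 0"
        by (intro tendsto_mult tendsto_const LIMSEQ_power_zero) auto
      then have "eventually (\<lambda>n. T * (1/2)^n < h) sequentially"
        using h0 by (intro order_tendstoD) auto
      then obtain b where b: "T * (1/2)^b < h" by (auto simp: eventually_sequentially)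
      have bnd: "\<forall>y. h \<le> T / 2^y \<longrightarrow> y \<le> b"
      proof (intro allI impI, rule ccontr)
        fix y assume hy: "h \<le> T / 2^y" and "\<not> y \<le> b"
        then have "(2::real)^b \<le> 2^y" by (intro power_increasing) auto
        then have "T / 2^y \<le> T / 2^b" using T by (intro divide_left_mono) auto
        then show False using hy b by (simp add: power_divide)
      qed
      obtain m where m1: "h \<le> T / 2^m" and m2: "\<forall>y. h \<le> T / 2^y \<longrightarrow> y \<le> m"
        using Nat.ex_has_greatest_nat[of "\<lambda>y. h \<le> T / 2^y" J b, OF True bnd] by blast
      have mJ: "J \<le> m" using m2 True by auto
      have m3: "T / 2^Suc m < h" using m2[rule_format, of "Suc m"] by force
      have "\<bar>f t - f s\<bar> \<le> \<rho>^m * C0" using close[OF s st t _ mJ] m1 unfolding h_def C0_def by auto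
      also have "\<rho>^m = (1/2^m) powr \<alpha>" unfolding \<rho>_def by (rule rho_pow)
      also have "\<dots> \<le> (2/T * h) powr \<alpha>"
      proof (rule powr_mono2)
        show "1/2^m \<le> 2/T * h" using m3 T by (simp add: field_simps)
      qed (use a0 in auto)
      also have "\<dots> = (2/T) powr \<alpha> * h powr \<alpha>" using T h0 by (subst powr_mult[symmetric]) auto
      finally have "\<bar>f t - f s\<bar> \<le> C0 * (2/T) powr \<alpha> * h powr \<alpha>"
        using C0 by (simp add: mult_right_mono mult.commute mult.left_commute)
      also have "\<dots> \<le> L * h powr \<alpha>" unfolding L_def using K0
        by (intro mult_right_mono) auto
      finally show ?thesis unfolding h_def .
    next
      case False
      have "\<bar>f t - f s\<bar> \<le> 2 * K" using K[of t] K[of s] s st t by auto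
      also have "\<dots> \<le> 2 * K * (2^J/T * h) powr \<alpha>"
      proof -
        have "1 \<le> 2^J/T * h" using False T by (simp add: field_simps)
        then have "1 \<le> (2^J/T * h) powr \<alpha>" using a0 by (intro ge_one_powr_ge_zero) auto
        then show ?thesis using K0 mult_left_mono[of 1 _ K] by simp
      qed
      also have "\<dots> = 2 * K * ((2^J/T) powr \<alpha> * h powr \<alpha>)" using T h0 by (subst powr_mult[symmetric]) auto
      also have "\<dots> = 2 * K * (2^J/T) powr \<alpha> * h powr \<alpha>" by simp
      also have "\<dots> \<le> L * h powr \<alpha>" unfolding L_def using C0
        by (intro mult_right_mono) auto
      finally show ?thesis unfolding h_def .
    qed
  qed
  then show ?thesis using L0 that by blast
qed

end

lemma part_mono:
  assumes P: "is_partition T N tp" and ij: "i < j" and jN: "j \<le> N"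
  shows "tp i < tp j"
  using ij jN
proof (induction j)
  case 0 then show ?case by simp
next
  case (Suc j)
  have step: "tp j < tp (Suc j)" using P Suc.prems unfolding is_partition_def by auto
  show ?case
  proof (cases "i = j")
    case True then show ?thesis using step by simp
  next
    case False then have "tp i < tp j" using Suc by auto
    then show ?thesis using step by simp
  qed
qed

lemma part_range:
  assumes P: "is_partition T N tp" and k: "k \<le> N"
  shows "0 \<le> tp k" "tp k \<le> T"
proof -
  have t0: "tp 0 = 0" and tN: "tp N = T" using P unfolding is_partition_def by auto
  show "0 \<le> tp k" using part_mono[OF P, of 0 k] k t0 by (cases "k = 0") auto
  show "tp k \<le> T" using part_mono[OF P, of k N] k tN by (cases "k = N") auto
qed

lemma pdelta_pos:
  assumes P: "is_partition T N tp" and k: "1 \<le> k" "k \<le> N"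
  shows "0 < pdelta tp k"
  using part_mono[OF P, of "k-1" k] k unfolding pdelta_def by auto

lemma pmin_le:
  assumes P: "is_partition T N tp" and k: "1 \<le> k" "k \<le> N"
  shows "pmin N tp \<le> pdelta tp k" "pdelta tp k \<le> pmesh N tp"
  unfolding pmin_def pmesh_def using k by (auto intro!: Min_le Max_ge)

lemma pmin_pos:
  assumes P: "is_partition T N tp"
  shows "0 < pmin N tp"
proof -
  have N: "N \<ge> 1" using P unfolding is_partition_def by auto
  have "pmin N tp \<in> pdelta tp ` {1..N}" unfolding pmin_def using N by (intro Min_in) auto
  then show ?thesis using pdelta_pos[OF P] by auto
qed

lemma pmin_N:
  assumes P: "is_partition T N tp"
  shows "real N * pmin N tp \<le> T"
proof -
  have t0: "tp 0 = 0" and tN: "tp N = T" using P unfolding is_partition_def by auto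
  have "(\<Sum>k\<in>{1..N}. pdelta tp k) = (\<Sum>i<N. pdelta tp (Suc i))"
  proof -
    show ?thesis using sum.atLeast1_atMost_eq[of "pdelta tp" N] by simp
  qed
  also have "\<dots> = (\<Sum>i<N. tp (Suc i) - tp i)" unfolding pdelta_def by simp
  also have "\<dots> = T" using t0 tN by (simp add: sum_lessThan_telescope)
  finally have S: "(\<Sum>k\<in>{1..N}. pdelta tp k) = T" .
  have "real N * pmin N tp = (\<Sum>k\<in>{1..N}. pmin N tp)" by simp
  also have "\<dots> \<le> (\<Sum>k\<in>{1..N}. pdelta tp k)" using pmin_le[OF P] by (intro sum_mono) auto
  finally show ?thesis using S by simp
qed

lemma term_bound:
  fixes p m d1 d2 dD dB E1 E2 \<theta> \<alpha> H c :: real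
  assumes p: "0 < p" and d1: "p \<le> d1" "d1 \<le> m" and d2: "p \<le> d2" "d2 \<le> m"
    and mc: "m \<le> c * p" and m1: "m \<le> 1"
    and hD: "\<bar>dD\<bar> \<le> E1 * m^2 * m powr \<alpha>" and hB: "\<bar>dB\<bar> \<le> E2 * m * m powr \<alpha>"
    and E: "0 \<le> E1" "0 \<le> E2" "0 \<le> \<theta>" and a: "0 < \<alpha>" and H: "0 < H"
  shows "\<bar>d2 * ((dD + \<theta> * dB)^2 - \<theta>^2 * dB^2) /
            (d1 powr (H + 1/2) * d2 powr (H + 1/2) * (d1 + d2))\<bar>
         \<le> E1 * (E1 + 2 * \<theta> * E2) * c powr (4 + 2*\<alpha>) / 2 * p powr (2 + 2*\<alpha> - 2*H)"
proof -
  have m0: "0 < m" using p d1 by auto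
  have c0: "0 < c" using mc m0 p by (metis less_le_trans mult_pos_pos zero_less_mult_pos2)
  define A where "A = E1 * (E1 + 2 * \<theta> * E2)"
  have A0: "A \<ge> 0" unfolding A_def using E by auto
  have num: "(dD + \<theta> * dB)^2 - \<theta>^2 * dB^2 = dD * (dD + 2 * \<theta> * dB)"
    by (simp add: power2_eq_square algebra_simps)
  have ma: "0 \<le> m powr \<alpha>" by simp
  have m2: "m^2 \<le> m" using m0 m1 by (simp add: power2_eq_square mult_left_le_one_le)
  have b1: "\<bar>dD + 2 * \<theta> * dB\<bar> \<le> (E1 + 2 * \<theta> * E2) * m * m powr \<alpha>"
  proof -
    have "\<bar>dD + 2 * \<theta> * dB\<bar> \<le> \<bar>dD\<bar> + 2 * \<theta> * \<bar>dB\<bar>" using E abs_triangle_ineq[of dD "2*\<theta>*dB"] by (simp add: abs_mult)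
    also have "\<dots> \<le> E1 * m^2 * m powr \<alpha> + 2 * \<theta> * (E2 * m * m powr \<alpha>)"
      using hD hB E by (intro add_mono mult_left_mono) auto
    also have "\<dots> \<le> E1 * m * m powr \<alpha> + 2 * \<theta> * (E2 * m * m powr \<alpha>)"
      using m2 E ma by (intro add_mono mult_right_mono mult_left_mono) auto
    finally show ?thesis by (simp add: algebra_simps)
  qed
  have nb: "\<bar>(dD + \<theta> * dB)^2 - \<theta>^2 * dB^2\<bar> \<le> A * m powr (3 + 2*\<alpha>)"
  proof -
    have "\<bar>(dD + \<theta> * dB)^2 - \<theta>^2 * dB^2\<bar> = \<bar>dD\<bar> * \<bar>dD + 2 * \<theta> * dB\<bar>"
      unfolding num by (simp add: abs_mult)
    also have "\<dots> \<le> (E1 * m^2 * m powr \<alpha>) * ((E1 + 2 * \<theta> * E2) * m * m powr \<alpha>)"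
      using hD b1 by (intro mult_mono) auto
    also have "\<dots> = A * (m^3 * (m powr \<alpha> * m powr \<alpha>))" unfolding A_def
      by (simp add: power2_eq_square power3_eq_cube algebra_simps)
    also have "m^3 * (m powr \<alpha> * m powr \<alpha>) = m powr (3 + 2*\<alpha>)"
    proof -
      have "m^3 = m powr 3" using m0 by (simp add: powr_numeral)
      moreover have e: "3 + 2*\<alpha> = 3 + \<alpha> + \<alpha>" by simp
      ultimately show ?thesis unfolding e powr_add by (simp add: mult.assoc)
    qed
    finally show ?thesis .
  qed
  have den: "2 * p powr (2*H + 2) \<le> d1 powr (H + 1/2) * d2 powr (H + 1/2) * (d1 + d2)"
  proof -
    have "p powr (H + 1/2) \<le> d1 powr (H + 1/2)" using p d1 H by (intro powr_mono2) auto
    moreover have "p powr (H + 1/2) \<le> d2 powr (H + 1/2)" using p d2 H by (intro powr_mono2) auto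
    ultimately have "p powr (H + 1/2) * p powr (H + 1/2) * (p + p) \<le> d1 powr (H + 1/2) * d2 powr (H + 1/2) * (d1 + d2)"
      using d1 d2 p by (intro mult_mono add_mono) auto
    moreover have "p powr (H + 1/2) * p powr (H + 1/2) * (p + p) = 2 * p powr (2*H + 2)"
    proof -
      have e: "2*H + 2 = (H + 1/2) + (H + 1/2) + 1" by simp
      have "p powr (2*H+2) = p powr (H + 1/2) * p powr (H + 1/2) * p"
        unfolding e using p by (simp only: powr_add powr_one)
      then show ?thesis by simp
    qed
    ultimately show ?thesis by simp
  qed
  have den0: "0 < 2 * p powr (2*H + 2)" using p by simp
  have "\<bar>d2 * ((dD + \<theta> * dB)^2 - \<theta>^2 * dB^2) /
            (d1 powr (H + 1/2) * d2 powr (H + 1/2) * (d1 + d2))\<bar>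
        = d2 * \<bar>(dD + \<theta> * dB)^2 - \<theta>^2 * dB^2\<bar> / (d1 powr (H + 1/2) * d2 powr (H + 1/2) * (d1 + d2))"
    using p d1 d2 by (simp add: abs_mult abs_divide)
  also have "\<dots> \<le> m * (A * m powr (3 + 2*\<alpha>)) / (2 * p powr (2*H + 2))"
  proof (rule frac_le)
    show "0 \<le> m * (A * m powr (3 + 2*\<alpha>))" using A0 m0 by simp
    show "d2 * \<bar>(dD + \<theta> * dB)^2 - \<theta>^2 * dB^2\<bar> \<le> m * (A * m powr (3 + 2*\<alpha>))"
      using d2 p nb by (intro mult_mono) auto
  qed (use den den0 in auto)
  also have "\<dots> = A * m powr (4 + 2*\<alpha>) / (2 * p powr (2*H + 2))"
  proof -
    have e: "4 + 2*\<alpha> = 1 + (3 + 2*\<alpha>)" by simp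
    have "m powr (4 + 2*\<alpha>) = m * m powr (3 + 2*\<alpha>)" unfolding e using m0 by (simp only: powr_add powr_one)
    then show ?thesis by (simp add: algebra_simps)
  qed
  also have "\<dots> \<le> A * (c * p) powr (4 + 2*\<alpha>) / (2 * p powr (2*H + 2))"
    using A0 den0 mc m0 a by (intro divide_right_mono mult_left_mono powr_mono2) auto
  also have "\<dots> = A * c powr (4 + 2*\<alpha>) / 2 * p powr (2 + 2*\<alpha> - 2*H)"
  proof -
    have "(c * p) powr (4 + 2*\<alpha>) = c powr (4 + 2*\<alpha>) * p powr (4 + 2*\<alpha>)" using c0 p by (simp add: powr_mult)
    moreover have "p powr (4 + 2*\<alpha>) / p powr (2*H + 2) = p powr (2 + 2*\<alpha> - 2*H)"
      using p by (simp add: powr_diff[symmetric] algebra_simps)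
    moreover have "\<And>P Q R. A * (P * Q) / (2 * R) = A * P / 2 * (Q / R)"
      by (simp add: mult.assoc)
    ultimately show ?thesis by metis
  qed
  finally show ?thesis unfolding A_def .
qed

locale det =
  fixes T \<mu> \<theta> x0 H \<alpha> c L :: real and x b :: "real \<Rightarrow> real"
  assumes T: "T > 0" and mu: "\<mu> > 0" and th: "\<theta> > 0" and H: "0 < H"
    and a0: "0 < \<alpha>" and a1: "\<alpha> \<le> 1" and c: "c \<ge> 1" and L: "L \<ge> 0"
    and cont: "continuous_on {0..T} x"
    and eq: "\<forall>t\<in>{0..T}. x t = x0 - \<mu> * integral {0..t} x + \<theta> * b t"
    and hol: "\<And>s t. 0 \<le> s \<Longrightarrow> s \<le> t \<Longrightarrow> t \<le> T \<Longrightarrow> \<bar>b t - b s\<bar> \<le> L * (t - s) powr \<alpha>"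
begin

definition "D t = x0 - \<mu> * integral {0..t} x"

lemma xD: "t \<in> {0..T} \<Longrightarrow> x t = D t + \<theta> * b t"
  using eq unfolding D_def by auto

lemma D_deriv:
  assumes z: "z \<in> {0..T}"
  shows "(D has_vector_derivative (- \<mu> * x z)) (at z within {0..T})"
proof -
  have i: "((\<lambda>u. integral {0..u} x) has_vector_derivative x z) (at z within {0..T})"
    by (rule integral_has_vector_derivative[OF cont z])
  have "((\<lambda>u. \<mu> * integral {0..u} x) has_vector_derivative \<mu> * x z) (at z within {0..T})"
    using has_vector_derivative_mult_right[OF i, of \<mu>] by simp
  then have "((\<lambda>u. x0 - \<mu> * integral {0..u} x) has_vector_derivative 0 - \<mu> * x z) (at z within {0..T})"
    by (intro has_vector_derivative_diff has_vector_derivative_const)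
  then show ?thesis unfolding D_def[abs_def] by simp
qed

lemma mvt:
  assumes "0 \<le> u" "u \<le> v" "v \<le> T"
  shows "\<exists>z\<in>{u..v}. D v - D u = (v - u) * (- \<mu> * x z)"
proof -
  have "\<exists>z\<in>{u..v}. D v - D u = (\<lambda>h. h * (- \<mu> * x z)) (v - u)"
  proof (rule mvt_very_simple[OF assms(2)])
    fix z assume z: "u \<le> z" "z \<le> v"
    then have "z \<in> {0..T}" using assms by auto
    from D_deriv[OF this] have "(D has_vector_derivative (- \<mu> * x z)) (at z within {u..v})"
      by (rule has_vector_derivative_within_subset) (use assms in auto)
    then show "(D has_derivative (\<lambda>h. h * (- \<mu> * x z))) (at z within {u..v})"
      unfolding has_vector_derivative_def by simp
  qed
  then show ?thesis by simp
qed

definition "K = (SOME K. K \<ge> 0 \<and> (\<forall>t\<in>{0..T}. \<bar>x t\<bar> \<le> K))"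

lemma K: "K \<ge> 0" "\<And>t. t \<in> {0..T} \<Longrightarrow> \<bar>x t\<bar> \<le> K"
proof -
  have "bounded (x ` {0..T})" by (intro compact_imp_bounded compact_continuous_image cont) auto
  then obtain K0 where K0: "\<forall>y\<in>x ` {0..T}. norm y \<le> K0" unfolding bounded_iff by blast
  then have "\<exists>K. K \<ge> 0 \<and> (\<forall>t\<in>{0..T}. \<bar>x t\<bar> \<le> K)"
    by (intro exI[of _ "max K0 0"]) auto
  from someI_ex[OF this] show "K \<ge> 0" "\<And>t. t \<in> {0..T} \<Longrightarrow> \<bar>x t\<bar> \<le> K"
    unfolding K_def by auto
qed

definition "LX = \<mu> * K * T powr (1 - \<alpha>) + \<theta> * L"

lemma LX0: "LX \<ge> 0" unfolding LX_def using mu K th L by auto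

lemma lin_powr:
  assumes "0 \<le> h" "h \<le> T"
  shows "h \<le> T powr (1 - \<alpha>) * h powr \<alpha>"
proof (cases "h = 0")
  case True then show ?thesis by simp
next
  case False
  then have h0: "h > 0" using assms by auto
  have "h = h powr (1 - \<alpha>) * h powr \<alpha>" using h0 by (simp add: powr_add[symmetric])
  also have "\<dots> \<le> T powr (1 - \<alpha>) * h powr \<alpha>"
    using assms a1 h0 by (intro mult_right_mono powr_mono2) auto
  finally show ?thesis .
qed

lemma x_hol:
  assumes u: "0 \<le> u" "u \<le> v" "v \<le> T"
  shows "\<bar>x v - x u\<bar> \<le> LX * (v - u) powr \<alpha>"
proof -
  obtain z where z: "z \<in> {u..v}" and Dz: "D v - D u = (v - u) * (- \<mu> * x z)" using mvt[OF u] by blast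
  have "\<bar>D v - D u\<bar> \<le> (v - u) * (\<mu> * K)"
    unfolding Dz using u mu K(2)[of z] z by (simp add: abs_mult mult_left_mono)
  also have "\<dots> \<le> (T powr (1 - \<alpha>) * (v - u) powr \<alpha>) * (\<mu> * K)"
    using lin_powr[of "v - u"] u mu K(1) by (intro mult_right_mono) auto
  finally have dD: "\<bar>D v - D u\<bar> \<le> \<mu> * K * T powr (1 - \<alpha>) * (v - u) powr \<alpha>" by (simp add: mult_ac)
  have "x v - x u = (D v - D u) + \<theta> * (b v - b u)" using xD[of u] xD[of v] u by (simp add: algebra_simps)
  then have "\<bar>x v - x u\<bar> \<le> \<bar>D v - D u\<bar> + \<theta> * \<bar>b v - b u\<bar>"
    using th abs_triangle_ineq[of "D v - D u" "\<theta> * (b v - b u)"] by (simp add: abs_mult)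
  also have "\<dots> \<le> \<mu> * K * T powr (1 - \<alpha>) * (v - u) powr \<alpha> + \<theta> * (L * (v - u) powr \<alpha>)"
    using dD hol[OF u] th by (intro add_mono mult_left_mono) auto
  finally show ?thesis unfolding LX_def by (simp add: algebra_simps)
qed

lemma pts:
  assumes P: "is_partition T N tp" and k: "1 \<le> k" "Suc k \<le> N"
  shows "0 \<le> tp (k-1)" "tp (k-1) \<le> tp k" "tp k \<le> tp (Suc k)" "tp (Suc k) \<le> T"
    "pdelta tp k = tp k - tp (k-1)" "pdelta tp (Suc k) = tp (Suc k) - tp k"
    "pmin N tp \<le> pdelta tp k" "pdelta tp k \<le> pmesh N tp"
    "pmin N tp \<le> pdelta tp (Suc k)" "pdelta tp (Suc k) \<le> pmesh N tp"
  using part_range[OF P, of "k-1"] part_range[OF P, of "Suc k"] part_mono[OF P, of "k-1" k]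
    part_mono[OF P, of k "Suc k"] pmin_le[OF P, of k] pmin_le[OF P, of "Suc k"] k
  by (auto simp: pdelta_def)

lemma diff2_alt:
  assumes k: "1 \<le> k"
  shows "diff2 tp g k = pdelta tp k * (g (tp (Suc k)) - g (tp k)) - pdelta tp (Suc k) * (g (tp k) - g (tp (k-1)))"
  unfolding diff2_def by (simp add: algebra_simps)

lemma diff2_D_bound:
  assumes P: "is_partition T N tp" and k: "1 \<le> k" "Suc k \<le> N"
  shows "\<bar>diff2 tp D k\<bar> \<le> (\<mu> * LX * 2 powr \<alpha>) * (pmesh N tp)^2 * pmesh N tp powr \<alpha>"
proof -
  note F = pts[OF P k]
  define m where "m = pmesh N tp"
  define d1 where "d1 = pdelta tp k"
  define d2 where "d2 = pdelta tp (Suc k)"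
  have p0: "0 < pmin N tp" by (rule pmin_pos[OF P])
  have d10: "0 \<le> d1" "d1 \<le> m" and d20: "0 \<le> d2" "d2 \<le> m"
    using F p0 unfolding d1_def d2_def m_def by auto
  obtain \<xi> where \<xi>: "\<xi> \<in> {tp k..tp (Suc k)}" and e1: "D (tp (Suc k)) - D (tp k) = d2 * (- \<mu> * x \<xi>)"
    using mvt[of "tp k" "tp (Suc k)"] F unfolding d2_def by auto
  obtain \<eta> where \<eta>: "\<eta> \<in> {tp (k-1)..tp k}" and e2: "D (tp k) - D (tp (k-1)) = d1 * (- \<mu> * x \<eta>)"
    using mvt[of "tp (k-1)" "tp k"] F unfolding d1_def by auto
  have "diff2 tp D k = - \<mu> * (d1 * d2) * (x \<xi> - x \<eta>)"
    unfolding diff2_alt[OF k(1)] e1 e2 d1_def[symmetric] d2_def[symmetric] by (simp add: algebra_simps)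
  then have "\<bar>diff2 tp D k\<bar> = \<mu> * (d1 * d2) * \<bar>x \<xi> - x \<eta>\<bar>"
    using mu d10 d20 by (simp add: abs_mult)
  also have "\<dots> \<le> \<mu> * (m * m) * (LX * (2 * m) powr \<alpha>)"
  proof (intro mult_mono mult_left_mono)
    have "\<bar>x \<xi> - x \<eta>\<bar> \<le> LX * (\<xi> - \<eta>) powr \<alpha>"
      using x_hol[of \<eta> \<xi>] \<xi> \<eta> F by auto
    also have "\<dots> \<le> LX * (2 * m) powr \<alpha>"
      using \<xi> \<eta> F LX0 a0 d10 d20 unfolding d1_def d2_def
      by (intro mult_left_mono powr_mono2) auto
    finally show "\<bar>x \<xi> - x \<eta>\<bar> \<le> LX * (2 * m) powr \<alpha>" .
  qed (use d10 d20 mu in auto)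
  also have "\<dots> = (\<mu> * LX * 2 powr \<alpha>) * m^2 * m powr \<alpha>"
    using d10 by (simp add: powr_mult power2_eq_square mult_ac)
  finally show ?thesis unfolding m_def .
qed

lemma diff2_b_bound:
  assumes P: "is_partition T N tp" and k: "1 \<le> k" "Suc k \<le> N"
  shows "\<bar>diff2 tp b k\<bar> \<le> (2 * L) * pmesh N tp * pmesh N tp powr \<alpha>"
proof -
  note F = pts[OF P k]
  define m where "m = pmesh N tp"
  define d1 where "d1 = pdelta tp k"
  define d2 where "d2 = pdelta tp (Suc k)"
  have p0: "0 < pmin N tp" by (rule pmin_pos[OF P])
  have d10: "0 \<le> d1" "d1 \<le> m" and d20: "0 \<le> d2" "d2 \<le> m"
    using F p0 unfolding d1_def d2_def m_def by auto
  have h1: "\<bar>b (tp (Suc k)) - b (tp k)\<bar> \<le> L * m powr \<alpha>"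
  proof -
    have "\<bar>b (tp (Suc k)) - b (tp k)\<bar> \<le> L * d2 powr \<alpha>" using hol[of "tp k" "tp (Suc k)"] F unfolding d2_def by auto
    also have "\<dots> \<le> L * m powr \<alpha>" using L d20 a0 by (intro mult_left_mono powr_mono2) auto
    finally show ?thesis .
  qed
  have h2: "\<bar>b (tp k) - b (tp (k-1))\<bar> \<le> L * m powr \<alpha>"
  proof -
    have "\<bar>b (tp k) - b (tp (k-1))\<bar> \<le> L * d1 powr \<alpha>" using hol[of "tp (k-1)" "tp k"] F unfolding d1_def by auto
    also have "\<dots> \<le> L * m powr \<alpha>" using L d10 a0 by (intro mult_left_mono powr_mono2) auto
    finally show ?thesis .
  qed
  have "\<bar>diff2 tp b k\<bar> \<le> d1 * \<bar>b (tp (Suc k)) - b (tp k)\<bar> + d2 * \<bar>b (tp k) - b (tp (k-1))\<bar>"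
    unfolding diff2_alt[OF k(1)] d1_def[symmetric] d2_def[symmetric]
    using abs_triangle_ineq4[of "d1 * (b (tp (Suc k)) - b (tp k))" "d2 * (b (tp k) - b (tp (k-1)))"] d10 d20
    by (simp add: abs_mult)
  also have "\<dots> \<le> m * (L * m powr \<alpha>) + m * (L * m powr \<alpha>)"
    using d10 d20 h1 h2 L by (intro add_mono mult_mono) auto
  finally show ?thesis unfolding m_def by simp
qed

lemma diff2_x:
  assumes P: "is_partition T N tp" and k: "1 \<le> k" "Suc k \<le> N"
  shows "diff2 tp x k = diff2 tp D k + \<theta> * diff2 tp b k"
proof -
  note F = pts[OF P k]
  have "tp (k-1) \<in> {0..T}" "tp k \<in> {0..T}" "tp (Suc k) \<in> {0..T}" using F by auto
  then show ?thesis unfolding diff2_def using xD by (simp add: algebra_simps)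
qed

end

context det begin

lemma V2_diff:
  "V2 H N tp x - \<theta>^2 * V2 H N tp b = 2 * (\<Sum>k\<in>{1..<N}.
      pdelta tp (Suc k) * ((diff2 tp x k)^2 - \<theta>^2 * (diff2 tp b k)^2) /
      (pdelta tp k powr (H + 1/2) * pdelta tp (Suc k) powr (H + 1/2) * (pdelta tp k + pdelta tp (Suc k))))"
  unfolding V2_def by (simp add: sum_distrib_left sum_subtractf[symmetric] right_diff_distrib
      diff_divide_distrib mult_ac)

lemma main_bound:
  obtains C where "\<And>N tp. is_partition T N tp \<Longrightarrow> pmesh N tp \<le> c * pmin N tp \<Longrightarrow> pmesh N tp \<le> 1 \<Longrightarrow>
     \<bar>V2 H N tp x - \<theta>^2 * V2 H N tp b\<bar> \<le> C * pmin N tp powr (1 + 2*\<alpha> - 2*H)"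
proof -
  define E1 where "E1 = \<mu> * LX * 2 powr \<alpha>"
  define E2 where "E2 = 2 * L"
  define Cp where "Cp = E1 * (E1 + 2 * \<theta> * E2) * c powr (4 + 2*\<alpha>) / 2"
  have E: "0 \<le> E1" "0 \<le> E2" unfolding E1_def E2_def using mu LX0 L by auto
  have Cp0: "0 \<le> Cp" unfolding Cp_def using E th by auto
  have "\<bar>V2 H N tp x - \<theta>^2 * V2 H N tp b\<bar> \<le> (2 * T * Cp) * pmin N tp powr (1 + 2*\<alpha> - 2*H)"
    if P: "is_partition T N tp" and mc: "pmesh N tp \<le> c * pmin N tp" and m1: "pmesh N tp \<le> 1" for N tp
  proof -
    define p where "p = pmin N tp"
    define m where "m = pmesh N tp"
    have p0: "0 < p" unfolding p_def by (rule pmin_pos[OF P])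
    let ?tm = "\<lambda>k. pdelta tp (Suc k) * ((diff2 tp x k)^2 - \<theta>^2 * (diff2 tp b k)^2) /
      (pdelta tp k powr (H + 1/2) * pdelta tp (Suc k) powr (H + 1/2) * (pdelta tp k + pdelta tp (Suc k)))"
    have tb: "\<bar>?tm k\<bar> \<le> Cp * p powr (2 + 2*\<alpha> - 2*H)" if k: "k \<in> {1..<N}" for k
    proof -
      have k1: "1 \<le> k" "Suc k \<le> N" using k by auto
      note F = pts[OF P k1]
      show ?thesis
        unfolding diff2_x[OF P k1] Cp_def
      proof (rule term_bound)
        show "0 < p" by (rule p0)
        show "p \<le> pdelta tp k" "pdelta tp k \<le> m" "p \<le> pdelta tp (Suc k)" "pdelta tp (Suc k) \<le> m"
          using F unfolding p_def m_def by auto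
        show "m \<le> c * p" "m \<le> 1" using mc m1 unfolding p_def m_def by auto
        show "\<bar>diff2 tp D k\<bar> \<le> E1 * m^2 * m powr \<alpha>"
          using diff2_D_bound[OF P k1] unfolding E1_def m_def .
        show "\<bar>diff2 tp b k\<bar> \<le> E2 * m * m powr \<alpha>"
          using diff2_b_bound[OF P k1] unfolding E2_def m_def .
      qed (use E th a0 H in auto)
    qed
    have "\<bar>V2 H N tp x - \<theta>^2 * V2 H N tp b\<bar> = 2 * \<bar>\<Sum>k\<in>{1..<N}. ?tm k\<bar>"
      unfolding V2_diff by simp
    also have "\<dots> \<le> 2 * (\<Sum>k\<in>{1..<N}. \<bar>?tm k\<bar>)"
      by (intro mult_left_mono sum_abs) auto
    also have "\<dots> \<le> 2 * (\<Sum>k\<in>{1..<N}. Cp * p powr (2 + 2*\<alpha> - 2*H))"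
      using tb by (intro mult_left_mono sum_mono) auto
    also have "\<dots> = 2 * (real (N - 1) * Cp * p powr (2 + 2*\<alpha> - 2*H))" by simp
    also have "\<dots> \<le> 2 * (real N * Cp * p powr (2 + 2*\<alpha> - 2*H))"
      using Cp0 by (intro mult_left_mono mult_right_mono) auto
    also have "real N * Cp * p powr (2 + 2*\<alpha> - 2*H) = Cp * (real N * p) * p powr (1 + 2*\<alpha> - 2*H)"
    proof -
      have e: "2 + 2*\<alpha> - 2*H = 1 + (1 + 2*\<alpha> - 2*H)" by simp
      have "p powr (2 + 2*\<alpha> - 2*H) = p * p powr (1 + 2*\<alpha> - 2*H)"
        unfolding e using p0 by (simp only: powr_add powr_one less_imp_le)
      then show ?thesis by (simp add: mult_ac)
    qed
    also have "2 * (Cp * (real N * p) * p powr (1 + 2*\<alpha> - 2*H)) \<le> 2 * (Cp * T * p powr (1 + 2*\<alpha> - 2*H))"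
      using pmin_N[OF P] Cp0 unfolding p_def by (intro mult_left_mono mult_right_mono) auto
    finally show ?thesis unfolding p_def by (simp add: mult_ac)
  qed
  then show ?thesis using that by blast
qed

end

theorem lemma2:
  fixes M :: "'a measure" and B X :: "real \<Rightarrow> 'a \<Rightarrow> real"
    and T \<mu> \<theta> x0 H c :: real
    and N :: "nat \<Rightarrow> nat" and tp :: "nat \<Rightarrow> nat \<Rightarrow> real"
  assumes "T > 0" "\<mu> > 0" "\<theta> > 0" "0 < H" "H < 1"
    and "is_fBm M H B"
    and "AE \<omega> in M. continuous_on {0..T} (\<lambda>t. X t \<omega>) \<and>
           (\<forall>t\<in>{0..T}. X t \<omega> = x0 - \<mu> * integral {0..t} (\<lambda>s. X s \<omega>) + \<theta> * B t \<omega>)"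
    and "\<And>n. is_partition T (N n) (tp n)"
    and "c \<ge> 1" and "\<And>n. pmesh (N n) (tp n) \<le> c * pmin (N n) (tp n)"
    and "(\<lambda>n. pmesh (N n) (tp n)) \<longlonglongrightarrow> 0"
  shows "\<forall>\<epsilon>>0. AE \<omega> in M.
           (\<lambda>n. \<bar>V2 H (N n) (tp n) (\<lambda>t. X t \<omega>) - \<theta>\<^sup>2 * V2 H (N n) (tp n) (\<lambda>t. B t \<omega>)\<bar>)
             \<in> O(\<lambda>n. pmin (N n) (tp n) powr (1 - \<epsilon>))"
proof (intro allI impI)
  fix \<epsilon> :: real assume e0: "\<epsilon> > 0"
  note T = assms(1) and mu = assms(2) and th = assms(3) and H0 = assms(4) and H1 = assms(5)
    and fbm = assms(6) and eqAE = assms(7) and P = assms(8) and c = assms(9) and mc = assms(10)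
    and lim = assms(11)
  define \<delta> where "\<delta> = min \<epsilon> H / 2"
  define \<alpha> where "\<alpha> = H - \<delta>"
  have d0: "0 < \<delta>" unfolding \<delta>_def using e0 H0 by auto
  have a0: "0 < \<alpha>" and aH: "\<alpha> < H" and a1: "\<alpha> \<le> 1" unfolding \<alpha>_def \<delta>_def using e0 H0 H1 by auto
  have ex: "1 - \<epsilon> \<le> 1 + 2*\<alpha> - 2*H" unfolding \<alpha>_def \<delta>_def by auto
  have cont_all: "\<forall>\<omega>\<in>space M. continuous_on {0..} (\<lambda>t. B t \<omega>)" using fbm unfolding is_fBm_def by auto
  have ev1: "eventually (\<lambda>n. pmesh (N n) (tp n) < 1) sequentially"
    using lim by (rule order_tendstoD) simp
  from fbm_dyadic[OF fbm T a0 aH] eqAE AE_space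
  show "AE \<omega> in M.
           (\<lambda>n. \<bar>V2 H (N n) (tp n) (\<lambda>t. X t \<omega>) - \<theta>\<^sup>2 * V2 H (N n) (tp n) (\<lambda>t. B t \<omega>)\<bar>)
             \<in> O(\<lambda>n. pmin (N n) (tp n) powr (1 - \<epsilon>))"
  proof eventually_elim
    case (elim \<omega>)
    then obtain J where J: "\<And>j k. j \<ge> J \<Longrightarrow> k < (2::nat)^j \<Longrightarrow>
      \<bar>B (T * real (Suc k) / 2^j) \<omega> - B (T * real k / 2^j) \<omega>\<bar> \<le> (2 powr (-\<alpha>))^j" by blast
    have cB: "continuous_on {0..T} (\<lambda>t. B t \<omega>)"
      using cont_all elim by (auto intro: continuous_on_subset)
    interpret ch: chain "\<lambda>t. B t \<omega>" T \<alpha> J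
    proof
      fix j :: nat and k :: int assume j: "J \<le> j" "0 \<le> k" "k < 2^j"
      have kn: "nat k < (2::nat)^j" using j by (metis nat_less_iff of_nat_numeral of_nat_power)
      have "real (nat k) = of_int k" "real (Suc (nat k)) = of_int (k+1)" using j by auto
      then show "\<bar>B (T * of_int (k+1) / 2^j) \<omega> - B (T * of_int k / 2^j) \<omega>\<bar> \<le> (2 powr (-\<alpha>))^j"
        using J[OF j(1) kn] by (simp add: add.commute)
    qed (use T a0 cB in auto)
    obtain L where L: "L \<ge> 0" and hol: "\<And>s t. 0 \<le> s \<Longrightarrow> s \<le> t \<Longrightarrow> t \<le> T \<Longrightarrow>
        \<bar>B t \<omega> - B s \<omega>\<bar> \<le> L * (t - s) powr \<alpha>" using ch.holder_le by blast
    interpret dt: det T \<mu> \<theta> x0 H \<alpha> c L "\<lambda>t. X t \<omega>" "\<lambda>t. B t \<omega>"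
      by unfold_locales (use T mu th H0 a0 a1 c L elim hol in auto)
    obtain C where C: "\<And>N tp. is_partition T N tp \<Longrightarrow> pmesh N tp \<le> c * pmin N tp \<Longrightarrow> pmesh N tp \<le> 1 \<Longrightarrow>
      \<bar>V2 H N tp (\<lambda>t. X t \<omega>) - \<theta>^2 * V2 H N tp (\<lambda>t. B t \<omega>)\<bar> \<le> C * pmin N tp powr (1 + 2*\<alpha> - 2*H)"
      using dt.main_bound by blast
    show ?case
    proof (rule bigoI[where c="\<bar>C\<bar>"])
      show "eventually (\<lambda>n. norm \<bar>V2 H (N n) (tp n) (\<lambda>t. X t \<omega>) - \<theta>\<^sup>2 * V2 H (N n) (tp n) (\<lambda>t. B t \<omega>)\<bar>
              \<le> \<bar>C\<bar> * norm (pmin (N n) (tp n) powr (1 - \<epsilon>))) sequentially"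
        using ev1
      proof eventually_elim
        case (elim n)
        have p0: "0 < pmin (N n) (tp n)" by (rule pmin_pos[OF P])
        have N1: "1 \<le> N n" using P[of n] unfolding is_partition_def by auto
        have p1: "pmin (N n) (tp n) \<le> 1"
          using pmin_le[OF P, of 1 n] N1 elim by auto
        have "\<bar>V2 H (N n) (tp n) (\<lambda>t. X t \<omega>) - \<theta>^2 * V2 H (N n) (tp n) (\<lambda>t. B t \<omega>)\<bar>
              \<le> C * pmin (N n) (tp n) powr (1 + 2*\<alpha> - 2*H)"
          using C[OF P mc] elim by auto
        also have "\<dots> \<le> \<bar>C\<bar> * pmin (N n) (tp n) powr (1 + 2*\<alpha> - 2*H)"
          by (intro mult_right_mono) auto
        also have "\<dots> \<le> \<bar>C\<bar> * pmin (N n) (tp n) powr (1 - \<epsilon>)"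
          using p0 p1 ex by (intro mult_left_mono powr_mono') auto
        finally show ?case by simp
      qed
    qed
  qed
qed

end
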